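(* Let $T>0$, $L>0$, $\alpha\in\mathbb{R}\setminus\{0\}$, $n\ge2$ an integer, $x_0>L$, $0<t_0<T$, $\beta>0$, and $\psi(t,x)=(x-x_0)^2-\beta(t-t_0)^2$. Then there exist $\lambda_0>0$ and $C>0$ such that for all $\lambda>\lambda_0$ and all $v\in C_0^\infty((0,T)\times(0,L);\mathbb{R})$, $$\sum_{m=0}^{n-1}\int_0^T\!\!\int_0^L\lambda^{2n-2m-1}e^{2\lambda\psi}|\partial_x^m v|^2\,dx\,dt\le C\int_0^T\!\!\int_0^L e^{2\lambda\psi}\big|\alpha\partial_t v+\partial_x^n v\big|^2\,dx\,dt.$$ *)

theory Defs
  imports "HOL-Analysis.Analysis"
begin

text \<open>Functions of (t,x) are represented as maps on real \<times> real.
  pd True f is the partial derivative in t, pd False f the partial derivative in x.\<close>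

fun pd :: "bool \<Rightarrow> (real \<times> real \<Rightarrow> real) \<Rightarrow> real \<times> real \<Rightarrow> real" where
  "pd True f = (\<lambda>(t,x). deriv (\<lambda>s. f (s, x)) t)"
| "pd False f = (\<lambda>(t,x). deriv (\<lambda>y. f (t, y)) x)"

text \<open>Iterated partial derivative, applying the list of directions (last element first).\<close>
definition iterpd :: "bool list \<Rightarrow> (real \<times> real \<Rightarrow> real) \<Rightarrow> real \<times> real \<Rightarrow> real" where
  "iterpd ws f = foldr pd ws f"

definition smooth2 :: "(real \<times> real \<Rightarrow> real) \<Rightarrow> bool" where
  "smooth2 f \<longleftrightarrow> (\<forall>ws. continuous_on UNIV (iterpd ws f) \<and>
      (\<forall>t x. (\<lambda>s. iterpd ws f (s, x)) differentiable (at t) \<and>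
             (\<lambda>y. iterpd ws f (t, y)) differentiable (at x)))"

definition test_fun :: "real \<Rightarrow> real \<Rightarrow> (real \<times> real \<Rightarrow> real) \<Rightarrow> bool" where
  "test_fun T L v \<longleftrightarrow> smooth2 v \<and> compact (closure {p. v p \<noteq> 0}) \<and>
      closure {p. v p \<noteq> 0} \<subseteq> {0<..<T} \<times> {0<..<L}"

end

theory Submission
  imports Defs
begin


lemma int3: fixes f g h :: "'a::euclidean_space \<Rightarrow> real"
  assumes "f integrable_on S" "g integrable_on S" "h integrable_on S"
  shows "integral S (\<lambda>x. a * f x + (b * g x + c * h x)) = a * integral S f + (b * integral S g + c * integral S h)"
  using assms by (simp add: integral_add integrable_add integrable_on_mult_right)

lemma intc: fixes f r :: "'a::euclidean_space \<Rightarrow> real"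
  assumes "f integrable_on S" "r integrable_on S"
  shows "integral S (\<lambda>x. a * f x + r x) = a * integral S f + integral S r"
  using assms by (simp add: integral_add integrable_on_mult_right)

lemma int5: fixes f1 f2 f3 f4 f5 :: "'a::euclidean_space \<Rightarrow> real"
  assumes "f1 integrable_on S" "f2 integrable_on S" "f3 integrable_on S" "f4 integrable_on S" "f5 integrable_on S"
  shows "integral S (\<lambda>x. a1 * f1 x + (a2 * f2 x + (a3 * f3 x + (a4 * f4 x + a5 * f5 x))))
     = a1 * integral S f1 + (a2 * integral S f2 + (a3 * integral S f3 + (a4 * integral S f4 + a5 * integral S f5)))"
  using assms by (simp add: integral_add integrable_add integrable_on_mult_right)

lemma key_pw: fixes E A B q u \<alpha> c :: real assumes "0 \<le> E"
  shows "(1/2)*(E*A*A) + ((-1/2)*(E*B*B) + (\<alpha>*(E*A*(q + c*u)) + (\<alpha>*(E*B*(q+c*u)) + (-(\<alpha>^2*c^2))*(E*u*u))))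
     \<le> E*(\<alpha>*q + A)^2"
proof -
  have "E*(\<alpha>*q + A)^2 - ((1/2)*(E*A*A) + ((-1/2)*(E*B*B) + (\<alpha>*(E*A*(q + c*u)) + (\<alpha>*(E*B*(q+c*u)) + (-(\<alpha>^2*c^2))*(E*u*u)))))
      = E*(((A+\<alpha>*(q+c*u)) - 2*\<alpha>*c*u)^2 + (B - \<alpha>*(q+c*u))^2)/2"
    by (simp add: power2_eq_square algebra_simps)
  moreover have "0 \<le> E*(((A+\<alpha>*(q+c*u)) - 2*\<alpha>*c*u)^2 + (B - \<alpha>*(q+c*u))^2)/2"
    using assms by simp
  ultimately show ?thesis by linarith
qed

locale W1 =
  fixes L lam x0 :: real and E :: "real \<Rightarrow> real"
  assumes Lpos: "0 < L" and lam: "0 \<le> lam"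
    and E_der: "\<And>x. (E has_real_derivative (4*lam*(x-x0)*E x)) (at x)"
    and E_pos: "\<And>x. 0 < E x"
begin

definition good :: "(real\<Rightarrow>real) \<Rightarrow> bool" where
  "good f \<longleftrightarrow> (\<exists>F. F 0 = f \<and> (\<forall>k x. (F k has_real_derivative F (Suc k) x) (at x))
                 \<and> (\<forall>k. F k 0 = 0 \<and> F k L = 0))"

definition Ds :: "(real\<Rightarrow>real) \<Rightarrow> real \<Rightarrow> real" where
  "Ds f = (\<lambda>x. - deriv f x - 4*lam*(x-x0)*f x)"

definition ip :: "(real\<Rightarrow>real) \<Rightarrow> (real\<Rightarrow>real) \<Rightarrow> real" where
  "ip f g = integral {0..L} (\<lambda>x. E x * f x * g x)"

lemma good_der: assumes "good f" shows "(f has_real_derivative deriv f x) (at x)"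
proof -
  from assms obtain F where F: "F 0 = f" "\<forall>k x. (F k has_real_derivative F (Suc k) x) (at x)"
    unfolding good_def by blast
  then have "(f has_real_derivative F 1 x) (at x)" by auto
  then show ?thesis using DERIV_imp_deriv by metis
qed

lemma good_deriv: assumes "good f" shows "good (deriv f)"
proof -
  from assms obtain F where F: "F 0 = f" "\<forall>k x. (F k has_real_derivative F (Suc k) x) (at x)"
     "\<forall>k. F k 0 = 0 \<and> F k L = 0"
    unfolding good_def by blast
  have "deriv f = F 1"
  proof
    fix x show "deriv f x = F 1 x" using F DERIV_imp_deriv by (metis One_nat_def)
  qed
  then show ?thesis unfolding good_def using F by (intro exI[of _ "\<lambda>k. F (Suc k)"]) auto
qed

lemma good_zero: assumes "good f" shows "f 0 = 0" "f L = 0"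
  using assms unfolding good_def by auto

lemma good_cont: assumes "good f" shows "continuous_on S f"
  by (meson DERIV_isCont assms continuous_at_imp_continuous_on good_der)

lemma E_cont: "continuous_on S E"
  by (meson DERIV_isCont E_der continuous_at_imp_continuous_on)

lemma good_lin: assumes "good f" "good g" shows "good (\<lambda>x. a * f x + b * g x)"
proof -
  from assms(1) obtain F where F: "F 0 = f" "\<forall>k x. (F k has_real_derivative F (Suc k) x) (at x)"
     "\<forall>k. F k 0 = 0 \<and> F k L = 0"
    unfolding good_def by blast
  from assms(2) obtain G where G: "G 0 = g" "\<forall>k x. (G k has_real_derivative G (Suc k) x) (at x)"
     "\<forall>k. G k 0 = 0 \<and> G k L = 0"
    unfolding good_def by blast
  show ?thesis unfolding good_def
    apply (rule exI[of _ "\<lambda>k x. a * F k x + b * G k x"])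
    using F G by (auto intro!: derivative_eq_intros)
qed

lemma good_mul: assumes "good f" shows "good (\<lambda>x. (p*x+q) * f x)"
proof -
  from assms(1) obtain F where F: "F 0 = f" "\<forall>k x. (F k has_real_derivative F (Suc k) x) (at x)"
     "\<forall>k. F k 0 = 0 \<and> F k L = 0"
    unfolding good_def by blast
  have "((\<lambda>x. (p*x+q) * F k x + real k * p * F (k-1) x) has_real_derivative
        ((p*x+q) * F (Suc k) x + real (Suc k) * p * F (Suc k - 1) x)) (at x)" for k x
  proof (cases k)
    case 0
    then show ?thesis using F(2) by (auto intro!: derivative_eq_intros simp: algebra_simps)
  next
    case (Suc j)
    then show ?thesis using F(2) by (auto intro!: derivative_eq_intros simp: algebra_simps)
  qed
  then show ?thesis unfolding good_def
    apply (intro exI[of _ "\<lambda>k x. (p*x+q) * F k x + real k * p * F (k-1) x"])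
    using F by auto
qed

lemma good_ext: "good f \<Longrightarrow> f = g \<Longrightarrow> good g" by simp

lemma deriv_lin: assumes "good f" "good g"
  shows "deriv (\<lambda>x. a * f x + b * g x) = (\<lambda>x. a * deriv f x + b * deriv g x)"
proof
  fix x
  have "((\<lambda>x. a * f x + b * g x) has_real_derivative (a * deriv f x + b * deriv g x)) (at x)"
    using good_der[OF assms(1)] good_der[OF assms(2)] by (auto intro!: derivative_eq_intros)
  then show "deriv (\<lambda>x. a * f x + b * g x) x = a * deriv f x + b * deriv g x"
    by (rule DERIV_imp_deriv)
qed

lemma Ds_eq: "Ds f = (\<lambda>x. (-1) * deriv f x + (-1) * ((4*lam*x + (-4*lam*x0)) * f x))"
  unfolding Ds_def by (auto simp: algebra_simps)

lemma good_Ds: assumes "good f" shows "good (Ds f)"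
  unfolding Ds_eq by (intro good_lin good_mul good_deriv assms)

lemma good_Dspow: assumes "good f" shows "good ((Ds^^j) f)"
  by (induction j) (auto intro: good_Ds assms)

lemma good_derivpow: assumes "good f" shows "good ((deriv^^j) f)"
  by (induction j) (auto intro: good_deriv assms)

lemma Ds_lin: assumes "good f" "good g"
  shows "Ds (\<lambda>x. a * f x + b * g x) = (\<lambda>x. a * Ds f x + b * Ds g x)"
  unfolding Ds_def deriv_lin[OF assms] by (auto simp: algebra_simps)

lemma comm: assumes "good f" shows "Ds (deriv f) = (\<lambda>x. deriv (Ds f) x + 4*lam*f x)"
proof
  fix x
  have "(Ds f has_real_derivative (- deriv (deriv f) x - 4*lam*f x - 4*lam*(x-x0)*deriv f x)) (at x)"
    unfolding Ds_def using good_der[OF assms] good_der[OF good_deriv[OF assms]]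
    by (auto intro!: derivative_eq_intros simp: algebra_simps)
  then have "deriv (Ds f) x = - deriv (deriv f) x - 4*lam*f x - 4*lam*(x-x0)*deriv f x"
    by (rule DERIV_imp_deriv)
  then show "Ds (deriv f) x = deriv (Ds f) x + 4*lam*f x"
    unfolding Ds_def by (simp add: algebra_simps)
qed

lemma comm_pow: assumes "good y"
  shows "(Ds^^(Suc j)) (deriv y) = (\<lambda>x. deriv ((Ds^^(Suc j)) y) x + 4*lam*real (Suc j) * (Ds^^j) y x)"
proof (induction j)
  case 0
  then show ?case using comm[OF assms] by simp
next
  case (Suc j)
  define z where "z = (Ds^^(Suc j)) y"
  define r where "r = (Ds^^j) y"
  have gz: "good z" "good (deriv z)" "good r" unfolding z_def r_def
    using good_Dspow[OF assms, of "Suc j"] good_Dspow[OF assms, of j] good_deriv by auto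
  have zr: "Ds r = z" unfolding z_def r_def by simp
  have "(Ds^^(Suc (Suc j))) (deriv y) = Ds ((Ds^^(Suc j)) (deriv y))" by simp
  also have "\<dots> = Ds (\<lambda>x. 1 * deriv z x + (4*lam*real (Suc j)) * r x)"
    using Suc unfolding z_def r_def by simp
  also have "\<dots> = (\<lambda>x. 1 * Ds (deriv z) x + (4*lam*real (Suc j)) * Ds r x)"
    by (rule Ds_lin[OF gz(2,3)])
  also have "\<dots> = (\<lambda>x. deriv (Ds z) x + 4*lam*real (Suc (Suc j)) * z x)"
    unfolding comm[OF gz(1)] zr by (auto simp: algebra_simps)
  finally show ?case unfolding z_def by simp
qed

lemma ii: "continuous_on UNIV (f::real\<Rightarrow>real) \<Longrightarrow> f integrable_on {0..L}"
  by (rule integrable_continuous_real) (auto intro: continuous_on_subset)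

lemma ip_int: assumes "good f" "good g" shows "(\<lambda>x. E x * f x * g x) integrable_on {0..L}"
  by (intro ii continuous_intros E_cont good_cont assms)

lemma ip_sym: "ip f g = ip g f"
  unfolding ip_def by (simp add: mult_ac)

lemma ip_nonneg: assumes "good f" shows "0 \<le> ip f f"
  unfolding ip_def
  by (rule integral_nonneg[OF ip_int[OF assms assms]]) (simp add: E_pos less_imp_le mult.assoc)

lemma ip_lin: assumes "good f" "good g" "good h"
  shows "ip f (\<lambda>x. a * g x + b * h x) = a * ip f g + b * ip f h"
proof -
  have "ip f (\<lambda>x. a * g x + b * h x) = integral {0..L} (\<lambda>x. a * (E x * f x * g x) + b * (E x * f x * h x))"
    unfolding ip_def by (simp add: algebra_simps)
  also have "\<dots> = a * ip f g + b * ip f h"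
    unfolding ip_def
    by (subst integral_add) (auto intro!: integrable_on_mult_right ip_int assms)
  finally show ?thesis .
qed

lemma adjoint: assumes "good f" "good g" shows "ip (deriv f) g = ip f (Ds g)"
proof -
  define h where "h x = E x * f x * g x" for x
  define h' where "h' x = 4*lam*(x-x0)*E x * f x * g x + E x * deriv f x * g x + E x * f x * deriv g x" for x
  have "(h' has_integral (h L - h 0)) {0..L}"
  proof (rule fundamental_theorem_of_calculus)
    show "0 \<le> L" using Lpos by simp
    fix x
    have "(h has_real_derivative h' x) (at x)" unfolding h_def h'_def
      using E_der good_der[OF assms(1)] good_der[OF assms(2)]
      by (auto intro!: derivative_eq_intros simp: algebra_simps)
    then show "(h has_vector_derivative h' x) (at x within {0..L})"
      by (simp add: has_real_derivative_iff_has_vector_derivative has_vector_derivative_at_within)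
  qed
  then have "integral {0..L} h' = 0" unfolding h_def using good_zero[OF assms(1)] by (simp add: integral_unique)
  moreover have "integral {0..L} h' = ip (deriv f) g - ip f (Ds g)"
  proof -
    have "h' = (\<lambda>x. E x * deriv f x * g x - E x * f x * Ds g x)"
      unfolding h'_def Ds_def by (auto simp: algebra_simps)
    then show ?thesis unfolding ip_def
      by (simp add: integral_diff ip_int good_deriv good_Ds assms)
  qed
  ultimately show ?thesis by simp
qed


lemma step0: assumes "good y" shows "ip (deriv y) (deriv y) = ip (Ds y) (Ds y) + 4*lam*ip y y"
proof -
  have g: "good (deriv y)" "good (Ds y)" "good (deriv (Ds y))"
    using assms by (auto intro: good_deriv good_Ds)
  have "ip (deriv y) (deriv y) = ip y (Ds (deriv y))" by (rule adjoint[OF assms g(1)])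
  also have "Ds (deriv y) = (\<lambda>x. 1 * deriv (Ds y) x + (4*lam) * y x)"
    using comm[OF assms] by simp
  also have "ip y \<dots> = 1 * ip y (deriv (Ds y)) + (4*lam) * ip y y"
    by (rule ip_lin[OF assms g(3) assms])
  also have "ip y (deriv (Ds y)) = ip (Ds y) (Ds y)"
    using adjoint[OF g(2) assms] ip_sym by metis
  finally show ?thesis by simp
qed

lemma stepS: assumes "good y"
  shows "ip ((Ds^^(Suc (Suc i))) y) ((Ds^^(Suc (Suc i))) y) \<le> ip ((Ds^^(Suc i)) (deriv y)) ((Ds^^(Suc i)) (deriv y))"
proof -
  define z where "z = (Ds^^(Suc i)) y"
  define r where "r = (Ds^^i) y"
  define c where "c = 4*lam*real (Suc i)"
  define F where "F = (Ds^^(Suc i)) (deriv y)"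
  have gz: "good z" "good (deriv z)" "good r" "good F" unfolding z_def r_def F_def
    using good_Dspow[OF assms, of "Suc i"] good_Dspow[OF assms, of i] good_deriv
      good_Dspow[OF good_deriv[OF assms], of "Suc i"] by auto
  have zr: "Ds r = z" unfolding z_def r_def by simp
  have Fe: "F = (\<lambda>x. 1 * deriv z x + c * r x)"
    unfolding F_def comm_pow[OF assms] z_def r_def c_def by simp
  have a1: "ip F F = 1 * ip F (deriv z) + c * ip F r"
    by (subst (2) Fe) (rule ip_lin[OF gz(4,2,3)])
  have a2': "ip (deriv z) F = 1 * ip (deriv z) (deriv z) + c * ip (deriv z) r"
    by (subst Fe) (rule ip_lin[OF gz(2,2,3)])
  have a3': "ip r F = 1 * ip r (deriv z) + c * ip r r"
    by (subst Fe) (rule ip_lin[OF gz(3,2,3)])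
  have a2: "ip F (deriv z) = 1 * ip (deriv z) (deriv z) + c * ip (deriv z) r"
    using a2' ip_sym by metis
  have a3: "ip F r = 1 * ip r (deriv z) + c * ip r r"
    using a3' ip_sym by metis
  have a4: "ip (deriv z) r = ip z z" using adjoint[OF gz(1,3)] zr by simp
  have a5: "ip r (deriv z) = ip z z" using a4 ip_sym by metis
  have a6: "ip (deriv z) (deriv z) = ip (Ds z) (Ds z) + 4*lam*ip z z" by (rule step0[OF gz(1)])
  have "ip F F = ip (Ds z) (Ds z) + (4*lam + 2*c) * ip z z + c*c * ip r r"
    using a1 a2 a3 a4 a5 a6 by (simp add: algebra_simps)
  moreover have "0 \<le> (4*lam + 2*c) * ip z z" "0 \<le> c*c * ip r r"
    using ip_nonneg[OF gz(1)] ip_nonneg[OF gz(3)] lam unfolding c_def by auto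
  moreover have "ip (Ds z) (Ds z) = ip ((Ds^^(Suc (Suc i))) y) ((Ds^^(Suc (Suc i))) y)" unfolding z_def by simp
  ultimately show ?thesis unfolding F_def by linarith
qed

lemma step: assumes "good y"
  shows "ip ((Ds^^(Suc j)) y) ((Ds^^(Suc j)) y) \<le> ip ((Ds^^j) (deriv y)) ((Ds^^j) (deriv y))"
proof (cases j)
  case 0
  then show ?thesis using step0[OF assms] ip_nonneg[OF assms] lam by simp
next
  case (Suc i)
  then show ?thesis using stepS[OF assms] by simp
qed

lemma Kest: assumes "good u" "1 \<le> n"
  shows "4*lam*ip ((deriv^^(n-1)) u) ((deriv^^(n-1)) u)
     \<le> ip ((deriv^^n) u) ((deriv^^n) u) - ip ((Ds^^n) u) ((Ds^^n) u)"
proof -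
  define X where "X j = ip ((Ds^^j) ((deriv^^(n-j)) u)) ((Ds^^j) ((deriv^^(n-j)) u))" for j
  have mono: "X (Suc j) \<le> X j" if "j < n" for j
  proof -
    define y where "y = (deriv^^(n - Suc j)) u"
    have gy: "good y" unfolding y_def by (rule good_derivpow[OF assms(1)])
    have "n - j = Suc (n - Suc j)" using that by simp
    then have "(deriv^^(n-j)) u = deriv y" unfolding y_def by simp
    then show ?thesis unfolding X_def y_def[symmetric] using step[OF gy, of j] by simp
  qed
  have chain: "1 \<le> j \<longrightarrow> j \<le> n \<longrightarrow> X j \<le> X 1" for j
  proof (induction j)
    case 0 then show ?case by simp
  next
    case (Suc j)
    then show ?case using mono[of j] by (cases j) auto
  qed
  define y where "y = (deriv^^(n - 1)) u"
  have gy: "good y" unfolding y_def by (rule good_derivpow[OF assms(1)])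
  have "n = Suc (n - 1)" using assms by simp
  then have dn: "(deriv^^n) u = deriv y" unfolding y_def by (metis funpow.simps(2) comp_apply)
  have X0: "X 0 = ip (deriv y) (deriv y)" unfolding X_def by (simp add: dn)
  have X1: "X 1 = ip (Ds y) (Ds y)" unfolding X_def y_def by simp
  have Xn: "X n = ip ((Ds^^n) u) ((Ds^^n) u)" unfolding X_def by simp
  have s0: "X 0 = X 1 + 4*lam*ip y y" using step0[OF gy] X0 X1 by simp
  have s1: "X n \<le> X 1" using chain[of n] assms(2) by blast
  have s2: "X 0 = ip ((deriv^^n) u) ((deriv^^n) u)" unfolding X_def by simp
  show ?thesis unfolding y_def[symmetric] using s0 s1 s2 Xn by linarith
qed

lemma Lest: assumes "good u"
  shows "ip (\<lambda>x. (2*lam*x + (-2*lam*x0)) * u x) (\<lambda>x. (2*lam*x + (-2*lam*x0)) * u x) \<le> ip (deriv u) (deriv u)"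
proof -
  define w where "w = (\<lambda>x. (2*lam*x + (-2*lam*x0)) * u x)"
  have gw: "good w" unfolding w_def by (rule good_mul[OF assms])
  have gdu: "good (deriv u)" by (rule good_deriv[OF assms])
  have dw: "deriv w x = 2*lam*u x + (2*lam*x + (-2*lam*x0)) * deriv u x" for x
  proof -
    have "(w has_real_derivative (2*lam*u x + (2*lam*x + (-2*lam*x0)) * deriv u x)) (at x)"
      unfolding w_def using good_der[OF assms] by (auto intro!: derivative_eq_intros simp: algebra_simps)
    then show ?thesis by (rule DERIV_imp_deriv)
  qed
  have i1: "ip (deriv u) w = ip u (Ds w)" by (rule adjoint[OF assms gw])
  have "ip u (Ds w) = integral {0..L} (\<lambda>x. (-2*lam) * (E x*u x*u x) + ((-1) * (E x * deriv u x * w x) + (-2) * (E x*w x*w x)))"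
    unfolding ip_def Ds_def dw by (rule integral_cong) (simp add: w_def algebra_simps)
  also have "\<dots> = (-2*lam) * ip u u + ((-1) * ip (deriv u) w + (-2) * ip w w)"
    unfolding ip_def by (rule int3) (auto intro!: ip_int assms gw gdu)
  finally have i2: "ip (deriv u) w = - lam * ip u u - ip w w" using i1 by simp
  have gs: "good (\<lambda>x. 1 * deriv u x + 1 * w x)" by (rule good_lin[OF gdu gw])
  have "ip (\<lambda>x. 1 * deriv u x + 1 * w x) (\<lambda>x. 1 * deriv u x + 1 * w x)
      = integral {0..L} (\<lambda>x. 1 * (E x * deriv u x * deriv u x) + (2 * (E x * deriv u x * w x) + 1 * (E x * w x * w x)))"
    unfolding ip_def by (rule integral_cong) (simp add: algebra_simps)
  also have "\<dots> = 1 * ip (deriv u) (deriv u) + (2 * ip (deriv u) w + 1 * ip w w)"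
    unfolding ip_def by (rule int3) (auto intro!: ip_int assms gw gdu)
  finally have "0 \<le> ip (deriv u) (deriv u) + (2 * ip (deriv u) w + ip w w)"
    using ip_nonneg[OF gs] by simp
  moreover have "0 \<le> lam * ip u u" using ip_nonneg[OF assms] lam by simp
  ultimately show ?thesis unfolding w_def[symmetric] using i2 by linarith
qed

lemma adj_pow: assumes "good f" "good g" shows "ip ((Ds^^n) f) g = ip f ((deriv^^n) g)"
  using assms(1)
proof (induction n arbitrary: f)
  case 0 then show ?case by simp
next
  case (Suc n)
  have "ip ((Ds^^(Suc n)) f) g = ip ((Ds^^n) (Ds f)) g" by (simp add: funpow_Suc_right del: funpow.simps)
  also have "\<dots> = ip (Ds f) ((deriv^^n) g)" by (rule Suc.IH[OF good_Ds[OF Suc.prems]])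
  also have "\<dots> = ip (deriv ((deriv^^n) g)) f"
    using adjoint[OF good_derivpow[OF assms(2)] Suc.prems, of n] ip_sym by metis
  also have "\<dots> = ip f ((deriv^^(Suc n)) g)" using ip_sym by simp
  finally show ?case .
qed

lemma derivpow_lin: assumes "good f" "good g"
  shows "(deriv^^k) (\<lambda>x. a * f x + b * g x) = (\<lambda>x. a * (deriv^^k) f x + b * (deriv^^k) g x)"
proof (induction k)
  case 0 then show ?case by simp
next
  case (Suc k)
  then show ?case using deriv_lin[OF good_derivpow[OF assms(1)] good_derivpow[OF assms(2)]] by simp
qed

lemma main1D: assumes gu: "good u" and gq: "good q" and n: "1 \<le> n"
  shows "(1/2)*(4*lam*ip ((deriv^^(n-1)) u) ((deriv^^(n-1)) u))
       + \<alpha> * (ip ((deriv^^n) u) (\<lambda>x. 1 * q x + c * u x) + ip u ((deriv^^n) (\<lambda>x. 1 * q x + c * u x)))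
       - \<alpha>^2*c^2 * ip u u
     \<le> integral {0..L} (\<lambda>x. E x * (\<alpha> * q x + (deriv^^n) u x)^2)"
proof -
  define g where "g = (\<lambda>x. 1 * q x + c * u x)"
  define A where "A = (deriv^^n) u"
  define B where "B = (Ds^^n) u"
  have gg: "good g" unfolding g_def by (rule good_lin[OF gq gu])
  have gA: "good A" unfolding A_def by (rule good_derivpow[OF gu])
  have gB: "good B" unfolding B_def by (rule good_Dspow[OF gu])
  have K: "4*lam*ip ((deriv^^(n-1)) u) ((deriv^^(n-1)) u) \<le> ip A A - ip B B"
    unfolding A_def B_def by (rule Kest[OF gu n])
  have adj: "ip B g = ip u ((deriv^^n) g)" unfolding B_def by (rule adj_pow[OF gu gg])
  define \<Phi> where "\<Phi> x = (1/2)*(E x*A x*A x) + ((-1/2)*(E x*B x*B x) + (\<alpha>*(E x*A x*g x) + (\<alpha>*(E x*B x*g x) + (-(\<alpha>^2*c^2))*(E x*u x*u x))))" for x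
  have pw: "\<Phi> x \<le> E x * (\<alpha> * q x + A x)^2" for x
    unfolding \<Phi>_def g_def using key_pw[of "E x" "A x" "B x" \<alpha> "q x" c "u x"] E_pos[of x] by simp
  have iPhi: "integral {0..L} \<Phi> = (1/2)*ip A A + ((-1/2)*ip B B + (\<alpha>*ip A g + (\<alpha>*ip B g + (-(\<alpha>^2*c^2))*ip u u)))"
    unfolding \<Phi>_def ip_def
    by (rule int5) (auto intro!: ip_int gA gB gg gu)
  have int1: "\<Phi> integrable_on {0..L}" unfolding \<Phi>_def
    by (intro integrable_add integrable_on_mult_right ip_int gA gB gg gu)
  have int2: "(\<lambda>x. E x * (\<alpha> * q x + A x)^2) integrable_on {0..L}"
    by (intro ii continuous_intros E_cont good_cont gq gA)
  have "integral {0..L} \<Phi> \<le> integral {0..L} (\<lambda>x. E x * (\<alpha> * q x + A x)^2)"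
    by (rule integral_le[OF int1 int2 pw])
  then show ?thesis using K adj iPhi unfolding g_def[symmetric] A_def[symmetric]
    by (simp add: algebra_simps)
qed

end



lemma iterpd_Nil[simp]: "iterpd [] f = f" by (simp add: iterpd_def)
lemma iterpd_Cons: "iterpd (w#ws) f = pd w (iterpd ws f)" by (simp add: iterpd_def)
lemma iterpd_append: "iterpd (ws'@ws) f = iterpd ws' (iterpd ws f)" by (simp add: iterpd_def)

lemma smooth2_iter: "smooth2 f \<Longrightarrow> smooth2 (iterpd ws f)"
  unfolding smooth2_def by (simp add: iterpd_append[symmetric])

lemma smooth2_cont: "smooth2 f \<Longrightarrow> continuous_on UNIV (iterpd ws f)"
  unfolding smooth2_def by blast

lemma smooth2_dx: assumes "smooth2 f"
  shows "((\<lambda>y. iterpd ws f (t,y)) has_real_derivative iterpd (False#ws) f (t,y)) (at y)"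
proof -
  have "(\<lambda>y. iterpd ws f (t,y)) differentiable (at y)" using assms unfolding smooth2_def by blast
  then show ?thesis unfolding iterpd_Cons
    by (simp add: DERIV_deriv_iff_real_differentiable[symmetric])
qed

lemma smooth2_dt: assumes "smooth2 f"
  shows "((\<lambda>s. iterpd ws f (s,x)) has_real_derivative iterpd (True#ws) f (s,x)) (at s)"
proof -
  have "(\<lambda>s. iterpd ws f (s,x)) differentiable (at s)" using assms unfolding smooth2_def by blast
  then show ?thesis unfolding iterpd_Cons
    by (simp add: DERIV_deriv_iff_real_differentiable[symmetric])
qed

lemma clairaut: assumes sm: "smooth2 g" shows "pd False (pd True g) = pd True (pd False g)"
proof (rule ext)
  fix p :: "real \<times> real"
  obtain t y where p: "p = (t,y)" by (cases p)
  define gx where "gx = iterpd [False] g"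
  define gt where "gt = iterpd [True] g"
  define gxt where "gxt = iterpd [True, False] g"
  define gtx where "gtx = iterpd [False, True] g"
  have cgxt: "continuous_on UNIV gxt" unfolding gxt_def by (rule smooth2_cont[OF sm])
  have dgx_t: "((\<lambda>s. gx (s,w)) has_real_derivative gxt (s,w)) (at s)" for s w
    unfolding gx_def gxt_def using smooth2_dt[OF sm, of "[False]"] by simp
  have dg_x: "((\<lambda>w. g (s,w)) has_real_derivative gx (s,w)) (at w)" for s w
    unfolding gx_def using smooth2_dx[OF sm, of "[]"] by simp
  have dg_t: "((\<lambda>s. g (s,w)) has_real_derivative gt (s,w)) (at s)" for s w
    unfolding gt_def using smooth2_dt[OF sm, of "[]"] by simp
  have dgt_x: "((\<lambda>w. gt (s,w)) has_real_derivative gtx (s,w)) (at w)" for s w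
    unfolding gt_def gtx_def using smooth2_dx[OF sm, of "[True]"] by simp
  define x where "x = y - 1"
  have ftc: "g (s,z) - g (s,x) = integral {x..z} (\<lambda>w. gx (s,w))" if "x \<le> z" for s z
  proof -
    have "((\<lambda>w. gx (s,w)) has_integral (g (s,z) - g (s,x))) {x..z}"
      using that by (intro fundamental_theorem_of_calculus)
        (auto simp: has_real_derivative_iff_has_vector_derivative[symmetric] intro: DERIV_subset dg_x)
    then show ?thesis by (simp add: integral_unique)
  qed
  have cprod: "continuous_on (UNIV \<times> cbox x z) (\<lambda>(s, w). gxt (s, w))" for z
  proof -
    have "(\<lambda>(s, w). gxt (s, w)) = gxt" by auto
    then show ?thesis using cgxt continuous_on_subset by fastforce
  qed
  have cslice: "continuous_on S (\<lambda>w. gxt (s,w))" for S s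
    by (intro continuous_on_compose2[OF cgxt] continuous_intros) auto
  have cgx: "continuous_on UNIV gx" unfolding gx_def by (rule smooth2_cont[OF sm])
  have cslicex: "continuous_on S (\<lambda>w. gx (s,w))" for S s
    by (intro continuous_on_compose2[OF cgx] continuous_intros) auto
  have lz: "gt (t,z) - gt (t,x) = integral {x..z} (\<lambda>w. gxt (t,w))" if "x \<le> z" for z
  proof -
    have "((\<lambda>s. integral (cbox x z) (\<lambda>w. gx (s,w))) has_field_derivative integral (cbox x z) (\<lambda>w. gxt (t,w))) (at t within UNIV)"
      by (rule leibniz_rule_field_derivative[where fx="\<lambda>s w. gxt (s,w)"])
        (auto intro: dgx_t cprod integrable_continuous_real cslice cslicex continuous_on_subset[OF cgxt] simp: DERIV_subset)
    then have d1: "((\<lambda>s. integral {x..z} (\<lambda>w. gx (s,w))) has_real_derivative integral {x..z} (\<lambda>w. gxt (t,w))) (at t)"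
      by simp
    have d2: "((\<lambda>s. integral {x..z} (\<lambda>w. gx (s,w))) has_real_derivative gt (t,z) - gt (t,x)) (at t)"
    proof -
      have "((\<lambda>s. g (s,z) - g (s,x)) has_real_derivative gt (t,z) - gt (t,x)) (at t)"
        by (intro derivative_intros dg_t)
      then show ?thesis using ftc[OF that] by simp
    qed
    show ?thesis using DERIV_unique[OF d2 d1] .
  qed
  define b where "b = y + 1"
  have xb: "x < y" "y < b" unfolding x_def b_def by auto
  have dpsi: "((\<lambda>z. gt (t,x) + integral {x..z} (\<lambda>w. gxt (t,w))) has_real_derivative gxt (t,y)) (at y)"
  proof -
    have "((\<lambda>z. integral {x..z} (\<lambda>w. gxt (t,w))) has_real_derivative gxt (t,y)) (at y within {x..b})"
      by (rule integral_has_real_derivative) (use xb cslice in auto)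
    moreover have "at y within {x..b} = at y"
      by (rule at_within_interior) (use xb in auto)
    ultimately show ?thesis by (auto intro!: derivative_eq_intros)
  qed
  have lz': "gt (t,x) + integral {x..z} (\<lambda>w. gxt (t,w)) = gt (t,z)" if "z \<in> {x<..<b}" for z
  proof -
    have "x \<le> z" using that by simp
    from lz[OF this] show ?thesis by linarith
  qed
  have dphi: "((\<lambda>z. gt (t,z)) has_real_derivative gxt (t,y)) (at y)"
    by (rule has_field_derivative_transform_within_open[OF dpsi, of "{x<..<b}"])
       (use xb lz' in auto)
  have "gtx (t,y) = gxt (t,y)" using DERIV_unique[OF dgt_x dphi] .
  then have "iterpd [False, True] g (t,y) = iterpd [True, False] g (t,y)" by (simp only: gtx_def gxt_def)
  then show "pd False (pd True g) p = pd True (pd False g) p"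
    by (simp only: p iterpd_def foldr.simps comp_apply id_apply)
qed



lemma clair_iter: assumes "smooth2 v"
  shows "iterpd (replicate n False @ [True]) v = iterpd (True # replicate n False) v"
proof (induction n)
  case 0 then show ?case by simp
next
  case (Suc n)
  have "iterpd (replicate (Suc n) False @ [True]) v = pd False (iterpd (replicate n False @ [True]) v)"
    by (simp only: iterpd_Cons replicate_Suc append_Cons)
  also have "\<dots> = pd False (pd True (iterpd (replicate n False) v))" using Suc by (simp only: iterpd_Cons)
  also have "\<dots> = pd True (pd False (iterpd (replicate n False) v))"
    by (rule clairaut[OF smooth2_iter[OF assms]])
  also have "\<dots> = iterpd (True # replicate (Suc n) False) v" by (simp only: iterpd_Cons replicate_Suc)
  finally show ?case .
qed

lemma pdT: "pd True g (t,x) = deriv (\<lambda>s. g (s,x)) t" by simp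
lemma pdF: "pd False g (t,x) = deriv (\<lambda>y. g (t,y)) x" by simp

lemma vanish: assumes "p \<notin> closure {p. v p \<noteq> 0}" shows "iterpd ws v p = 0"
  using assms
proof (induction ws arbitrary: p)
  case Nil
  then show ?case by (metis (mono_tags, lifting) closure_subset iterpd_Nil mem_Collect_eq subsetD)
next
  case (Cons w ws)
  define K where "K = closure {p. v p \<noteq> 0}"
  have "open (- K)" unfolding K_def by auto
  obtain t x where p: "p = (t,x)" by (cases p)
  have "p \<in> - K" using Cons.prems unfolding K_def by simp
  then obtain e where e: "e > 0" "ball p e \<subseteq> - K" using \<open>open (-K)\<close> open_contains_ball by blast
  have z: "iterpd ws v q = 0" if "q \<in> ball p e" for q using Cons.IH e that unfolding K_def by blast
  show ?case
  proof (cases w)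
    case True
    have "((\<lambda>s. iterpd ws v (s,x)) has_real_derivative 0) (at t)"
    proof (rule has_field_derivative_transform_within_open[of "\<lambda>s. 0" 0 t "ball t e"])
      fix s assume "s \<in> ball t e"
      then have "(s,x) \<in> ball p e" unfolding p by (simp add: dist_Pair_Pair)
      then show "0 = iterpd ws v (s,x)" using z by simp
    qed (use e in auto)
    then have "deriv (\<lambda>s. iterpd ws v (s,x)) t = 0" by (rule DERIV_imp_deriv)
    moreover have "w = True" using True by simp
    ultimately show ?thesis unfolding p iterpd_Cons by (simp only: pdT)
  next
    case False
    have "((\<lambda>y. iterpd ws v (t,y)) has_real_derivative 0) (at x)"
    proof (rule has_field_derivative_transform_within_open[of "\<lambda>s. 0" 0 x "ball x e"])
      fix s assume "s \<in> ball x e"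
      then have "(t,s) \<in> ball p e" unfolding p by (simp add: dist_Pair_Pair)
      then show "0 = iterpd ws v (t,s)" using z by simp
    qed (use e in auto)
    then have "deriv (\<lambda>y. iterpd ws v (t,y)) x = 0" by (rule DERIV_imp_deriv)
    moreover have "w = False" using False by simp
    ultimately show ?thesis unfolding p iterpd_Cons by (simp only: pdF)
  qed
qed




lemma box_eq: "{0..T} \<times> {0..L} = cbox (0::real,0::real) (T,L)"
  by (simp add: cbox_Pair_eq)

lemma int2_mono:
  fixes f1 f2 :: "real \<times> real \<Rightarrow> real"
  assumes c1: "continuous_on UNIV f1" and c2: "continuous_on UNIV f2"
    and le: "\<And>t. t \<in> {0..T} \<Longrightarrow> integral {0..L} (\<lambda>x. f1 (t,x)) \<le> integral {0..L} (\<lambda>x. f2 (t,x))"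
  shows "integral ({0..T} \<times> {0..L}) f1 \<le> integral ({0..T} \<times> {0..L}) f2"
proof -
  have eq: "integral ({0..T} \<times> {0..L}) f = integral {0..T} (\<lambda>t. integral {0..L} (\<lambda>x. f (t,x)))"
    if "continuous_on UNIV f" for f :: "real \<times> real \<Rightarrow> real"
    unfolding box_eq
    by (subst integral_prod_continuous) (auto intro: continuous_on_subset[OF that])
  have ip: "(\<lambda>t. integral {0..L} (\<lambda>x. f (t,x))) integrable_on {0..T}"
    if "continuous_on UNIV f" for f :: "real \<times> real \<Rightarrow> real"
  proof -
    have "continuous_on {0..T} (\<lambda>t. integral (cbox 0 L) (\<lambda>x. f (t,x)))"
      by (rule integral_continuous_on_param) (auto intro: continuous_on_subset[OF that])
    then show ?thesis by (intro integrable_continuous_real) simp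
  qed
  show ?thesis unfolding eq[OF c1] eq[OF c2]
    by (rule integral_le[OF ip[OF c1] ip[OF c2]]) (use le in auto)
qed

lemma int2_lin:
  fixes f1 f2 f3 :: "real \<times> real \<Rightarrow> real"
  assumes "continuous_on UNIV f1" "continuous_on UNIV f2" "continuous_on UNIV f3"
  shows "integral ({0..T} \<times> {0..L}) (\<lambda>p. a * f1 p + (b * f2 p + c * f3 p))
    = a * integral ({0..T} \<times> {0..L}) f1 + (b * integral ({0..T} \<times> {0..L}) f2 + c * integral ({0..T} \<times> {0..L}) f3)"
  unfolding box_eq by (rule int3) (auto intro!: integrable_continuous continuous_on_subset[OF assms(1)]
      continuous_on_subset[OF assms(2)] continuous_on_subset[OF assms(3)])

lemma alg:
  fixes Mf :: "nat \<Rightarrow> real" and lam d K R q :: real and n :: nat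
  assumes Mnn: "\<And>m. 0 \<le> Mf m" and step: "\<And>m. q * Mf m \<le> Mf (Suc m)" and qdef: "q = 4*lam^2*d^2"
    and q1: "1 \<le> q" and lam: "0 < lam" and d: "0 < d" and n: "2 \<le> n"
    and R: "2*lam*Mf (n-1) - K * Mf 0 \<le> R" and Kb: "K \<le> lam * q"
  shows "(\<Sum>m<n. lam^(2*n-2*m-1) * Mf m) \<le> (\<Sum>m<n. (1/(4*d^2))^(n-1-m)) * R"
proof -
  have q0: "0 \<le> q" using q1 by simp
  have pw: "q^k * Mf m \<le> Mf (m+k)" for k m
  proof (induction k)
    case 0 show ?case by simp
  next
    case (Suc k)
    have "q^(Suc k) * Mf m = q * (q^k * Mf m)" by simp
    also have "\<dots> \<le> q * Mf (m+k)" using Suc q0 by (rule mult_left_mono)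
    also have "\<dots> \<le> Mf (m + Suc k)" using step[of "m+k"] by simp
    finally show ?case .
  qed
  have qq: "(1/(4*d^2)) * q = lam^2" unfolding qdef using d by (simp add: field_simps)
  have trm: "lam^(2*n-2*m-1) * Mf m \<le> lam * (1/(4*d^2))^(n-1-m) * Mf (n-1)" if "m < n" for m
  proof -
    define k where "k = n-1-m"
    have e1: "2*n-2*m-1 = Suc (2*k)" unfolding k_def using that by simp
    have e2: "m + k = n - 1" unfolding k_def using that by simp
    have "lam^(2*n-2*m-1) = lam * (lam^2)^k" unfolding e1 by (simp add: power_mult)
    also have "(lam^2)^k = (1/(4*d^2))^k * q^k" unfolding qq[symmetric] by (rule power_mult_distrib)
    finally have "lam^(2*n-2*m-1) * Mf m = (lam * (1/(4*d^2))^k) * (q^k * Mf m)" by simp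
    also have "\<dots> \<le> (lam * (1/(4*d^2))^k) * Mf (n-1)"
      using pw[of k m] e2 lam by (intro mult_left_mono) auto
    finally show ?thesis unfolding k_def by simp
  qed
  have S1: "(\<Sum>m<n. lam^(2*n-2*m-1) * Mf m) \<le> (\<Sum>m<n. lam * (1/(4*d^2))^(n-1-m) * Mf (n-1))"
    by (rule sum_mono) (use trm in auto)
  have S2: "(\<Sum>m<n. lam * (1/(4*d^2))^(n-1-m) * Mf (n-1)) = (\<Sum>m<n. (1/(4*d^2))^(n-1-m)) * (lam * Mf (n-1))"
    by (subst sum_distrib_right) (simp add: mult_ac)
  have "q * Mf 0 \<le> q^(n-1) * Mf 0"
  proof (rule mult_right_mono)
    show "q \<le> q^(n-1)" using power_increasing[of 1 "n-1" q] q1 n by simp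
  qed (rule Mnn)
  also have "\<dots> \<le> Mf (n-1)" using pw[of "n-1" 0] by simp
  finally have qM: "q * Mf 0 \<le> Mf (n-1)" .
  have "K * Mf 0 \<le> lam * q * Mf 0" using Kb Mnn[of 0] by (rule mult_right_mono)
  also have "\<dots> \<le> lam * Mf (n-1)" using qM lam by (simp add: mult.assoc)
  finally have "K * Mf 0 \<le> lam * Mf (n-1)" .
  then have Rb: "lam * Mf (n-1) \<le> R" using R by linarith
  have Kc0: "0 \<le> (\<Sum>m<n. (1/(4*d^2))^(n-1-m))" by (intro sum_nonneg) simp
  show ?thesis using S1 S2 mult_left_mono[OF Rb Kc0] by linarith
qed

locale M =
  fixes T L \<alpha> x0 t0 \<beta> lam :: real and n :: nat and v :: "real \<times> real \<Rightarrow> real"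
  assumes T: "T > 0" and L: "L > 0" and n: "n \<ge> 2" and x0: "x0 > L"
    and t0: "0 < t0" "t0 < T" and \<beta>: "\<beta> > 0" and lam: "lam > 0"
    and tv: "test_fun T L v"
begin

definition e :: "real \<times> real \<Rightarrow> real" where
  "e p = exp (2*lam*((snd p - x0)^2 - \<beta>*(fst p - t0)^2))"

definition V :: "nat \<Rightarrow> real \<times> real \<Rightarrow> real" where
  "V m = iterpd (replicate m False) v"

lemma sm: "smooth2 v" using tv unfolding test_fun_def by blast

lemma supp: "p \<in> closure {p. v p \<noteq> 0} \<Longrightarrow> p \<in> {0<..<T} \<times> {0<..<L}"
  using tv unfolding test_fun_def by blast

lemma vanx: "iterpd ws v (t,0) = 0" "iterpd ws v (t,L) = 0"
  by (rule vanish, use supp in force)+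

lemma vant: "iterpd ws v (0,x) = 0" "iterpd ws v (T,x) = 0"
  by (rule vanish, use supp in force)+

lemma e_cont: "continuous_on S e"
  unfolding e_def by (intro continuous_intros)

lemma e_pos: "0 < e p" unfolding e_def by simp

lemma e_dx: "((\<lambda>x. e (t,x)) has_real_derivative 4*lam*(x-x0)*e (t,x)) (at x)"
  unfolding e_def by (auto intro!: derivative_eq_intros simp: algebra_simps)

lemma e_dt: "((\<lambda>s. e (s,x)) has_real_derivative 2*lam*(-2*\<beta>*(s-t0))*e (s,x)) (at s)"
  unfolding e_def by (auto intro!: derivative_eq_intros simp: algebra_simps)

lemma W1t: "W1 L lam x0 (\<lambda>x. e (t,x))"
  by unfold_locales (use L lam e_dx e_pos in auto)

lemma sl_good: "W1.good L (\<lambda>y. iterpd ws v (t,y))"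
  unfolding W1.good_def[OF W1t]
  apply (rule exI[of _ "\<lambda>k y. iterpd (replicate k False @ ws) v (t,y)"])
  using smooth2_dx[OF sm] vanx by auto

lemma sl_pow: "(deriv^^k) (\<lambda>y. iterpd ws v (t,y)) = (\<lambda>y. iterpd (replicate k False @ ws) v (t,y))"
proof (induction k)
  case 0 then show ?case by simp
next
  case (Suc k)
  show ?case
  proof (rule ext)
    fix y
    have "deriv (\<lambda>y. iterpd (replicate k False @ ws) v (t,y)) y = iterpd (replicate (Suc k) False @ ws) v (t,y)"
      by (rule DERIV_imp_deriv) (use smooth2_dx[OF sm, of "replicate k False @ ws" t y] in simp)
    then show "(deriv^^(Suc k)) (\<lambda>y. iterpd ws v (t,y)) y = iterpd (replicate (Suc k) False @ ws) v (t,y)"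
      using Suc by simp
  qed
qed

definition Tt where "Tt = iterpd [True] v"
definition Wn where "Wn = iterpd (True # replicate n False) v"
definition h where "h p = e p * (V n p * Tt p + V 0 p * Wn p + 2*lam*(-2*\<beta>*(fst p - t0)) * V 0 p * V n p)"
definition K where "K = 4*\<alpha>^2*lam^2*\<beta>^2*T^2"
definition f3 where "f3 p = 2*lam*(e p * V (n-1) p ^2) + (\<alpha> * h p + (-K) * (e p * V 0 p ^2))"

lemma cV: "continuous_on UNIV (V m)" unfolding V_def by (rule smooth2_cont[OF sm])
lemma cTt: "continuous_on UNIV Tt" unfolding Tt_def by (rule smooth2_cont[OF sm])
lemma cWn: "continuous_on UNIV Wn" unfolding Wn_def by (rule smooth2_cont[OF sm])
lemma ch: "continuous_on UNIV h" unfolding h_def[abs_def] by (intro continuous_intros cV cTt cWn e_cont)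
lemma cf3: "continuous_on UNIV f3" unfolding f3_def[abs_def] by (intro continuous_intros cV ch e_cont)

lemma sl_cont: assumes "continuous_on UNIV F" shows "continuous_on S (\<lambda>x. F (t,x))"
  by (rule continuous_on_compose2[OF assms]) (auto intro!: continuous_intros)

lemma sl_int: assumes "continuous_on UNIV F" shows "(\<lambda>x. F (t,x)::real) integrable_on {0..L}"
  by (rule integrable_continuous_real) (rule sl_cont[OF assms])

lemma sl_e: "continuous_on S (\<lambda>x. e (t,x))" by (rule sl_cont[OF e_cont])
lemma sl_v: "continuous_on S (\<lambda>x. iterpd ws v (t,x))" by (rule sl_cont[OF smooth2_cont[OF sm]])

lemma sl_V: "continuous_on S (\<lambda>x. V m (t,x))" by (rule sl_cont[OF cV])

lemma F1t: "integral {0..L} (\<lambda>x. 4*lam^2*(x0-L)^2 * (e (t,x) * V m (t,x)^2))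
    \<le> integral {0..L} (\<lambda>x. e (t,x) * V (Suc m) (t,x)^2)"
proof -
  interpret W: W1 L lam x0 "\<lambda>x. e (t,x)" by (rule W1t)
  define u where "u = (\<lambda>y. iterpd (replicate m False) v (t,y))"
  have gu: "W.good u" unfolding u_def by (rule sl_good)
  have du0: "(deriv^^1) u = (\<lambda>y. iterpd (replicate 1 False @ replicate m False) v (t,y))"
    unfolding u_def by (rule sl_pow)
  have du1: "replicate 1 False @ replicate m False = replicate (Suc m) False" by simp
  have du2: "(deriv^^1) u = deriv u" by simp
  have du3: "deriv u = (\<lambda>y. iterpd (replicate 1 False @ replicate m False) v (t,y))"
    using du2[symmetric] du0 by (rule trans)
  have du: "deriv u = (\<lambda>y. V (Suc m) (t,y))" unfolding V_def using du3 by (simp only: du1)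
  have L1: "W.ip (\<lambda>x. (2*lam*x + (-2*lam*x0)) * u x) (\<lambda>x. (2*lam*x + (-2*lam*x0)) * u x) \<le> W.ip (deriv u) (deriv u)"
    by (rule W.Lest[OF gu])
  have L2: "integral {0..L} (\<lambda>x. 4*lam^2*(x0-L)^2 * (e (t,x) * V m (t,x)^2))
      \<le> W.ip (\<lambda>x. (2*lam*x + (-2*lam*x0)) * u x) (\<lambda>x. (2*lam*x + (-2*lam*x0)) * u x)"
    unfolding W.ip_def
  proof (rule integral_le)
    show "(\<lambda>x. 4*lam^2*(x0-L)^2 * (e (t,x) * V m (t,x)^2)) integrable_on {0..L}"
      by (rule sl_int[of "\<lambda>p. 4*lam^2*(x0-L)^2 * (e p * V m p^2)"]) (intro continuous_intros e_cont cV)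
    show "(\<lambda>x. e (t,x) * ((2*lam*x + (-2*lam*x0)) * u x) * ((2*lam*x + (-2*lam*x0)) * u x)) integrable_on {0..L}"
      unfolding u_def
      by (rule sl_int[of "\<lambda>p. e p * ((2*lam * snd p + (-2*lam*x0)) * iterpd (replicate m False) v p) * ((2*lam * snd p + (-2*lam*x0)) * iterpd (replicate m False) v p)", unfolded snd_conv])
        (intro continuous_intros e_cont smooth2_cont[OF sm])
    fix x :: real assume x: "x \<in> {0..L}"
    have "(x0-L)^2 \<le> (x-x0)^2"
    proof -
      have "0 \<le> x0 - L" "x0 - L \<le> x0 - x" using x x0 by auto
      then have "(x0-L)^2 \<le> (x0-x)^2" by (simp add: power_mono)
      then show ?thesis by (simp add: power2_commute)
    qed
    then have le1: "4*lam^2*(x0-L)^2 * (e (t,x) * u x^2) \<le> 4*lam^2*(x-x0)^2 * (e (t,x) * u x^2)"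
      by (intro mult_right_mono mult_left_mono) (auto simp: e_pos less_imp_le)
    have a: "(2*lam*x + (-2*lam*x0)) = 2*lam*(x-x0)" by (simp add: algebra_simps)
    have eq2: "e (t,x) * ((2*lam*(x-x0)) * u x) * ((2*lam*(x-x0)) * u x) = 4*lam^2*(x-x0)^2 * (e (t,x) * u x^2)"
      by (simp add: power2_eq_square algebra_simps)
    have vu: "V m (t,x) = u x" unfolding u_def V_def by simp
    have "4*lam^2*(x0-L)^2 * (e (t,x) * V m (t,x)^2) = 4*lam^2*(x0-L)^2 * (e (t,x) * u x^2)" by (simp only: vu)
    also have "\<dots> \<le> 4*lam^2*(x-x0)^2 * (e (t,x) * u x^2)" by (rule le1)
    also have "\<dots> = e (t,x) * ((2*lam*(x-x0)) * u x) * ((2*lam*(x-x0)) * u x)" by (rule eq2[symmetric])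
    also have "\<dots> = e (t,x) * ((2*lam*x + (-2*lam*x0)) * u x) * ((2*lam*x + (-2*lam*x0)) * u x)" by (simp only: a)
    finally show "4*lam^2*(x0-L)^2 * (e (t,x) * V m (t,x)^2) \<le> e (t,x) * ((2*lam*x + (-2*lam*x0)) * u x) * ((2*lam*x + (-2*lam*x0)) * u x)" .
  qed
  have L3: "W.ip (deriv u) (deriv u) = integral {0..L} (\<lambda>x. e (t,x) * V (Suc m) (t,x)^2)"
    unfolding W.ip_def du by (rule integral_cong) (simp only: power2_eq_square mult.assoc)
  have "integral {0..L} (\<lambda>x. 4*lam^2*(x0-L)^2 * (e (t,x) * V m (t,x)^2)) \<le> W.ip (deriv u) (deriv u)"
    by (rule order_trans[OF L2 L1])
  then show ?thesis by (simp only: L3)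
qed

lemma ctwo: "continuous_on UNIV (\<lambda>p. e p * V m p ^2)"
  by (intro continuous_intros e_cont cV)

lemma F2t: assumes t: "t \<in> {0..T}"
  shows "integral {0..L} (\<lambda>x. f3 (t,x)) \<le> integral {0..L} (\<lambda>x. e (t,x) * (\<alpha> * Tt (t,x) + V n (t,x))^2)"
proof -
  interpret W: W1 L lam x0 "\<lambda>x. e (t,x)" by (rule W1t)
  define u where "u = (\<lambda>y. iterpd [] v (t,y))"
  define q where "q = (\<lambda>y. iterpd [True] v (t,y))"
  define c where "c = lam*(-2*\<beta>*(t-t0))"
  have gu: "W.good u" unfolding u_def by (rule sl_good)
  have gq: "W.good q" unfolding q_def by (rule sl_good)
  have n1: "1 \<le> n" using n by simp
  have main: "(1/2)*(4*lam*W.ip ((deriv^^(n-1)) u) ((deriv^^(n-1)) u))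
       + \<alpha> * (W.ip ((deriv^^n) u) (\<lambda>x. 1 * q x + c * u x) + W.ip u ((deriv^^n) (\<lambda>x. 1 * q x + c * u x)))
       - \<alpha>^2*c^2 * W.ip u u
     \<le> integral {0..L} (\<lambda>x. e (t,x) * (\<alpha> * q x + (deriv^^n) u x)^2)"
    by (rule W.main1D[OF gu gq n1])
  have pw: "(deriv^^k) u = (\<lambda>y. V k (t,y))" for k
  proof -
    have "(deriv^^k) u = (\<lambda>y. iterpd (replicate k False @ []) v (t,y))" unfolding u_def by (rule sl_pow)
    then show ?thesis unfolding V_def by (simp only: append_Nil2)
  qed
  have pq: "(deriv^^n) q = (\<lambda>y. Wn (t,y))"
  proof -
    have "(deriv^^n) q = (\<lambda>y. iterpd (replicate n False @ [True]) v (t,y))" unfolding q_def by (rule sl_pow)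
    then show ?thesis unfolding Wn_def by (simp only: clair_iter[OF sm])
  qed
  have pg: "(deriv^^n) (\<lambda>x. 1 * q x + c * u x) = (\<lambda>x. 1 * Wn (t,x) + c * V n (t,x))"
    unfolding W.derivpow_lin[OF gq gu] pq pw ..
  have gVn: "W.good (\<lambda>y. V n (t,y))" unfolding V_def by (rule sl_good)
  have gWn: "W.good (\<lambda>y. Wn (t,y))" unfolding Wn_def by (rule sl_good)
  have gg: "W.good (\<lambda>x. 1 * q x + c * u x)" by (rule W.good_lin[OF gq gu])
  have gg2: "W.good (\<lambda>x. 1 * Wn (t,x) + c * V n (t,x))" by (rule W.good_lin[OF gWn gVn])
  have uV: "u = (\<lambda>y. V 0 (t,y))" unfolding u_def V_def by simp
  have qT: "q = (\<lambda>y. Tt (t,y))" unfolding q_def Tt_def ..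
  define I1 where "I1 = integral {0..L} (\<lambda>x. e (t,x) * V (n-1) (t,x)^2)"
  define I0 where "I0 = integral {0..L} (\<lambda>x. e (t,x) * V 0 (t,x)^2)"
  define Ih where "Ih = integral {0..L} (\<lambda>x. h (t,x))"
  have eI1: "W.ip ((deriv^^(n-1)) u) ((deriv^^(n-1)) u) = I1"
    unfolding pw W.ip_def I1_def by (rule integral_cong) (simp only: power2_eq_square mult.assoc)
  have eI0: "W.ip u u = I0"
    unfolding uV W.ip_def I0_def by (rule integral_cong) (simp only: power2_eq_square mult.assoc)
  have eIh: "W.ip ((deriv^^n) u) (\<lambda>x. 1 * q x + c * u x) + W.ip u ((deriv^^n) (\<lambda>x. 1 * q x + c * u x)) = Ih"
  proof -
    have "W.ip (\<lambda>y. V n (t,y)) (\<lambda>x. 1 * q x + c * u x) + W.ip u (\<lambda>x. 1 * Wn (t,x) + c * V n (t,x))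
       = integral {0..L} (\<lambda>x. e (t,x) * V n (t,x) * (1 * q x + c * u x) + e (t,x) * u x * (1 * Wn (t,x) + c * V n (t,x)))"
      unfolding W.ip_def by (rule integral_add[symmetric]) (intro W.ip_int gVn gg gu gg2)+
    also have "\<dots> = Ih" unfolding Ih_def
    proof (rule integral_cong)
      fix x
      show "e (t,x) * V n (t,x) * (1 * q x + c * u x) + e (t,x) * u x * (1 * Wn (t,x) + c * V n (t,x)) = h (t,x)"
        unfolding h_def uV qT c_def by (simp add: algebra_simps)
    qed
    finally show ?thesis unfolding pg pw .
  qed
  have eR: "integral {0..L} (\<lambda>x. e (t,x) * (\<alpha> * q x + (deriv^^n) u x)^2)
      = integral {0..L} (\<lambda>x. e (t,x) * (\<alpha> * Tt (t,x) + V n (t,x))^2)"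
    unfolding pw qT ..
  have ef3: "integral {0..L} (\<lambda>x. f3 (t,x)) = 2*lam*I1 + (\<alpha> * Ih + (-K) * I0)"
    unfolding f3_def I1_def Ih_def I0_def
    by (rule int3) (rule sl_int, intro continuous_intros e_cont cV ch)+
  have I0nn: "0 \<le> I0" using W.ip_nonneg[OF gu] eI0 by simp
  have cK: "\<alpha>^2*c^2 \<le> K"
  proof -
    have "\<bar>t - t0\<bar> \<le> T" using t t0 by auto
    then have "(t-t0)^2 \<le> T^2" by (metis abs_ge_zero power2_abs power_mono)
    then have "\<alpha>^2*lam^2*(4*\<beta>^2)*(t-t0)^2 \<le> \<alpha>^2*lam^2*(4*\<beta>^2)*T^2"
      by (intro mult_left_mono) auto
    then show ?thesis unfolding c_def K_def by (simp add: power2_eq_square algebra_simps)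
  qed
  have "\<alpha>^2*c^2 * I0 \<le> K * I0" using cK I0nn by (rule mult_right_mono)
  moreover note main[unfolded eI1 eI0 eIh eR]
  ultimately show ?thesis unfolding ef3 by (simp add: algebra_simps)
qed

lemma hzero: "integral ({0..T} \<times> {0..L}) h = 0"
proof -
  have hc: "(\<lambda>(t,x). h (t,x)) = h" by auto
  have "integral ({0..T} \<times> {0..L}) h = integral (cbox 0 T) (\<lambda>t. integral (cbox 0 L) (\<lambda>x. h (t,x)))"
    unfolding box_eq by (rule integral_prod_continuous) (rule continuous_on_subset[OF ch], simp)
  also have "\<dots> = integral (cbox 0 L) (\<lambda>x. integral (cbox 0 T) (\<lambda>t. h (t,x)))"
    by (rule integral_swap_continuous) (unfold hc, rule continuous_on_subset[OF ch], simp)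
  also have "\<dots> = integral (cbox 0 L) (\<lambda>x. 0::real)"
  proof (rule integral_cong)
    fix x :: real
    define G where "G s = e (s,x) * V 0 (s,x) * V n (s,x)" for s
    have dV0: "((\<lambda>s. V 0 (s,x)) has_real_derivative Tt (s,x)) (at s)" for s
      unfolding V_def Tt_def using smooth2_dt[OF sm, of "[]"] by simp
    have dVn: "((\<lambda>s. V n (s,x)) has_real_derivative Wn (s,x)) (at s)" for s
      unfolding V_def Wn_def by (rule smooth2_dt[OF sm])
    have dG: "(G has_real_derivative h (s,x)) (at s)" for s
      unfolding G_def h_def by (auto intro!: derivative_eq_intros e_dt dV0 dVn simp: algebra_simps)
    have "((\<lambda>s. h (s,x)) has_integral (G T - G 0)) {0..T}"
      by (rule fundamental_theorem_of_calculus) (use T dG in \<open>auto simp: has_real_derivative_iff_has_vector_derivative[symmetric] intro: DERIV_subset\<close>)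
    moreover have "G T = 0" "G 0 = 0" unfolding G_def V_def using vant by auto
    ultimately show "integral (cbox 0 T) (\<lambda>t. h (t,x)) = 0" by (simp add: integral_unique)
  qed
  also have "\<dots> = 0" by simp
  finally show ?thesis .
qed

definition Mi where "Mi m = integral ({0..T} \<times> {0..L}) (\<lambda>p. e p * V m p ^2)"
definition Ri where "Ri = integral ({0..T} \<times> {0..L}) (\<lambda>p. e p * (\<alpha> * Tt p + V n p)^2)"

lemma FM: "4*lam^2*(x0-L)^2 * Mi m \<le> Mi (Suc m)"
proof -
  have "integral ({0..T} \<times> {0..L}) (\<lambda>p. 4*lam^2*(x0-L)^2 * (e p * V m p ^2))
      \<le> integral ({0..T} \<times> {0..L}) (\<lambda>p. e p * V (Suc m) p ^2)"
    by (rule int2_mono) (intro continuous_intros e_cont cV, intro continuous_intros e_cont cV, rule F1t)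
  then show ?thesis unfolding Mi_def by simp
qed

lemma Mnn: "0 \<le> Mi m"
  unfolding Mi_def box_eq
  by (rule integral_nonneg) (auto intro!: integrable_continuous continuous_on_subset[OF ctwo] simp: e_pos less_imp_le)

lemma FR: "2*lam*Mi (n-1) - K * Mi 0 \<le> Ri"
proof -
  have "integral ({0..T} \<times> {0..L}) f3 \<le> Ri"
    unfolding Ri_def by (rule int2_mono) (rule cf3, intro continuous_intros e_cont cV cTt, rule F2t)
  moreover have "integral ({0..T} \<times> {0..L}) f3 = 2*lam*Mi (n-1) + (\<alpha> * integral ({0..T} \<times> {0..L}) h + (-K) * Mi 0)"
    unfolding f3_def[abs_def] Mi_def by (rule int2_lin) (rule ctwo, rule ch, rule ctwo)
  ultimately show ?thesis using hzero by simp
qed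

lemma bound:
  assumes l1: "1/(2*(x0-L)) \<le> lam" and l2: "\<alpha>^2*\<beta>^2*T^2/(x0-L)^2 \<le> lam"
  shows "(\<Sum>m<n. integral ({0..T} \<times> {0..L}) (\<lambda>p. lam^(2*n-2*m-1) * e p * V m p^2))
     \<le> (\<Sum>m<n. (1/(4*(x0-L)^2))^(n-1-m)) * integral ({0..T} \<times> {0..L}) (\<lambda>p. e p * (\<alpha> * Tt p + V n p)^2)"
proof -
  define d where "d = x0 - L"
  have d: "0 < d" unfolding d_def using x0 by simp
  have q1: "1 \<le> 4*lam^2*d^2"
  proof -
    have "1 \<le> 2*d*lam" using l1 d unfolding d_def[symmetric] by (simp add: field_simps)
    then have "1 \<le> (2*d*lam)^2" by (simp add: one_le_power)
    then show ?thesis by (simp add: power_mult_distrib mult_ac)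
  qed
  have Kb: "K \<le> lam * (4*lam^2*d^2)"
  proof -
    have "\<alpha>^2*\<beta>^2*T^2 \<le> lam * d^2" using l2 d unfolding d_def[symmetric] by (simp add: field_simps)
    then have "4*lam^2*(\<alpha>^2*\<beta>^2*T^2) \<le> 4*lam^2*(lam * d^2)" by (intro mult_left_mono) auto
    then show ?thesis unfolding K_def by (simp add: mult_ac)
  qed
  have FM': "4*lam^2*d^2 * Mi m \<le> Mi (Suc m)" for m using FM unfolding d_def .
  have A: "(\<Sum>m<n. lam^(2*n-2*m-1) * Mi m) \<le> (\<Sum>m<n. (1/(4*d^2))^(n-1-m)) * Ri"
    by (rule alg[OF Mnn FM' refl q1 lam d n FR Kb])
  have B: "integral ({0..T} \<times> {0..L}) (\<lambda>p. lam^(2*n-2*m-1) * e p * V m p^2) = lam^(2*n-2*m-1) * Mi m" for m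
    unfolding Mi_def by (simp add: mult.assoc)
  show ?thesis using A unfolding B Ri_def d_def .
qed

end


theorem mainTheorem2:
  fixes T L \<alpha> x0 t0 \<beta> :: real and n :: nat and \<psi> :: "real \<times> real \<Rightarrow> real"
  assumes "T > 0" and "L > 0" and "\<alpha> \<noteq> 0" and "n \<ge> 2" and "x0 > L"
    and "0 < t0" and "t0 < T" and "\<beta> > 0"
    and "\<psi> = (\<lambda>(t, x). (x - x0)^2 - \<beta> * (t - t0)^2)"
  shows "\<exists>lam0 > 0. \<exists>C > 0. \<forall>lam > lam0. \<forall>v. test_fun T L v \<longrightarrow>
    (\<Sum>m<n. integral ({0..T} \<times> {0..L})
        (\<lambda>p. lam ^ (2*n - 2*m - 1) * exp (2 * lam * \<psi> p) * (iterpd (replicate m False) v p)^2))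
    \<le> C * integral ({0..T} \<times> {0..L})
        (\<lambda>p. exp (2 * lam * \<psi> p) * (\<alpha> * iterpd [True] v p + iterpd (replicate n False) v p)^2)"
proof -
  define d where "d = x0 - L"
  have d: "0 < d" unfolding d_def using assms by simp
  define lam0 where "lam0 = 1/(2*d) + \<alpha>^2*\<beta>^2*T^2/d^2 + 1"
  define C where "C = (\<Sum>m<n. (1/(4*d^2))^(n-1-m))"
  have lam0: "0 < lam0" unfolding lam0_def using d by (intro add_nonneg_pos add_nonneg_nonneg) auto
  have C: "0 < C" unfolding C_def
    by (rule sum_pos) (use assms d in \<open>auto simp: lessThan_empty_iff\<close>)
  have main: "(\<Sum>m<n. integral ({0..T} \<times> {0..L})
        (\<lambda>p. lam ^ (2*n - 2*m - 1) * exp (2 * lam * \<psi> p) * (iterpd (replicate m False) v p)^2))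
    \<le> C * integral ({0..T} \<times> {0..L})
        (\<lambda>p. exp (2 * lam * \<psi> p) * (\<alpha> * iterpd [True] v p + iterpd (replicate n False) v p)^2)"
    if lam: "lam > lam0" and tv: "test_fun T L v" for lam v
  proof -
    have lpos: "0 < lam" using lam lam0 by simp
    interpret I: M T L \<alpha> x0 t0 \<beta> lam n v
      by unfold_locales (use assms lpos tv in auto)
    have nn1: "0 \<le> 1/(2*d)" and nn2: "0 \<le> \<alpha>^2*\<beta>^2*T^2/d^2" using d by auto
    have lam': "1/(2*d) + \<alpha>^2*\<beta>^2*T^2/d^2 + 1 < lam" using lam unfolding lam0_def .
    have l1: "1/(2*(x0-L)) \<le> lam" unfolding d_def[symmetric] using lam' nn1 nn2 by linarith
    have l2: "\<alpha>^2*\<beta>^2*T^2/(x0-L)^2 \<le> lam" unfolding d_def[symmetric] using lam' nn1 nn2 by linarith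
    have ee: "exp (2 * lam * \<psi> p) = I.e p" for p
      by (cases p) (simp add: I.e_def assms(9))
    show ?thesis
      unfolding ee I.V_def[symmetric] I.Tt_def[symmetric] C_def d_def
      using I.bound[OF l1 l2] by simp
  qed
  show ?thesis using lam0 C main by blast
qed

end
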